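(* Let $A$ be a countable set, $\phi:\mathcal{X}_-\to\mathbb{R}$ a potential, and $(M_n)_{n\ge1}$ a strictly increasing sequence of natural numbers with $M_1=1$. Let $x,y\in\mathcal{X}_-$ and let $\mu,\nu\in\mathcal{P}(\phi)$ with $\mu[\eta_{-\infty}^0\in\cdot\,]=\delta_x$ and $\nu[\eta_{-\infty}^0\in\cdot\,]=\delta_y$. Then for all $n\ge1$, $0\le k\le n-1$ and all $a,b,c\in\mathcal{X}$, letting $w^{(b)}$ (resp. $w^{(c)}$) be the word $(w_1,\dots,w_{M_n-1})$ with $w_j=a_j$ for $M_{n-k}\le j\le M_n-1$ and $w_j=b_j$ (resp. $w_j=c_j$) for $1\le j<M_{n-k}$, \[ D_{\mathrm{KL}}\Big(\mu\big[\eta_{M_n}^{M_{n+1}-1}\in\cdot\mid \eta_1^{M_n-1}=w^{(b)}\big]\,\Big\|\,\nu\big[\eta_{M_n}^{M_{n+1}-1}\in\cdot\mid\eta_1^{M_n-1}=w^{(c)}\big]\Big)\le \sum_{j=M_n}^{M_{n+1}-1}\chi^2_{j-M_{n-k}}(\phi). \]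
   Context: $\mathcal{X}=A^{\mathbb{Z}}$, $\mathcal{X}_-=A^{\{0,-1,-2,\dots\}}$. For $a\in A$, $x\in\mathcal{X}_-$, $ax\in\mathcal{X}_-$ is the sequence $w$ with $w_0=a$, $w_{-m-1}=x_{-m}$ ($m\ge0$); for $b\in A$, $z\in\mathcal{X}$, $k\ge0$, $x\in\mathcal{X}_-$, $bz_{-k}^{-1}x$ is the sequence $w\in\mathcal{X}_-$ with $w_0=b$, $w_{-j}=z_{-j}$ ($1\le j\le k$), $w_{-k-1-m}=x_{-m}$ ($m\ge0$) (for $k=0$ this is $bx$). A potential is a measurable $\phi:\mathcal{X}_-\to\mathbb{R}$ with $\sum_{a\in A}e^{\phi(ax)}=1$ for all $x$. For $k\ge0$, $\chi^2_k(\phi)=\sup_{z\in\mathcal{X}}\sup_{x,y\in\mathcal{X}_-}\sum_{b\in A}\big(e^{\phi(bz_{-k}^{-1}x)}-e^{\phi(bz_{-k}^{-1}y)}\big)^2/e^{\phi(bz_{-k}^{-1}y)}$ (possibly $+\infty$). $\eta_n(x)=x_n$ on $\mathcal{X}$; $\eta_{-\infty}^n\in\mathcal{X}_-$ has coordinate $\eta_{n-m}$ at $-m$; $\eta_i^j=(\eta_i,\dots,\eta_j)$. A probability $\mu$ on $\mathcal{X}$ is compatible with $\phi$ if for all $n\ge0$, $a\in A$: $\mu[\eta_{n+1}=a\mid\eta_{-\infty}^n]=e^{\phi(a\,\eta_{-\infty}^n)}$ $\mu$-a.s.; $\mathcal{P}(\phi)$ is the set of such measures. For $\mu$ with $\mu[\eta_{-\infty}^0\in\cdot]=\delta_x$,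 the conditional law of the block $\eta_{m}^{m'}$ given $\eta_1^{m-1}=(w_1,\dots,w_{m-1})$ is the probability on $A^{m'-m+1}$ giving $(u_m,\dots,u_{m'})$ mass $\prod_{i=m}^{m'}e^{\phi(v^{(i)})}$, where $v^{(i)}\in\mathcal{X}_-$ has coordinates $u_i,u_{i-1},\dots,u_m,w_{m-1},\dots,w_1,x_0,x_{-1},\dots$ at positions $0,-1,-2,\dots$. $D_{\mathrm{KL}}(P\|Q)=\sum_yP(y)\ln(P(y)/Q(y))$. *)

theory Defs
  imports "HOL-Probability.Probability"
begin

text \<open>X = A^Z is modelled as int => 'a; X_- = A^{0,-1,-2,...} as nat => 'a,
  where (x :: nat => 'a) m is the coordinate at position -m.
  A countable set A is the countable type 'a, with the discrete sigma-algebra.\<close>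

definition XM :: "(int \<Rightarrow> 'a) measure" where
  "XM = PiM UNIV (\<lambda>_. count_space UNIV)"

definition XmM :: "(nat \<Rightarrow> 'a) measure" where
  "XmM = PiM UNIV (\<lambda>_. count_space UNIV)"

definition cons_past :: "'a \<Rightarrow> (nat \<Rightarrow> 'a) \<Rightarrow> (nat \<Rightarrow> 'a)" where
  "cons_past a x = (\<lambda>j. if j = 0 then a else x (j - 1))"

definition block_past :: "'a \<Rightarrow> (int \<Rightarrow> 'a) \<Rightarrow> nat \<Rightarrow> (nat \<Rightarrow> 'a) \<Rightarrow> (nat \<Rightarrow> 'a)" where
  "block_past b z k x = (\<lambda>j. if j = 0 then b else if j \<le> k then z (- int j) else x (j - k - 1))"

definition potential :: "((nat \<Rightarrow> 'a::countable) \<Rightarrow> real) \<Rightarrow> bool" where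
  "potential \<phi> \<longleftrightarrow> \<phi> \<in> borel_measurable XmM \<and>
     (\<forall>x. ((\<lambda>a. exp (\<phi> (cons_past a x))) has_sum 1) UNIV)"

definition chi2 :: "((nat \<Rightarrow> 'a::countable) \<Rightarrow> real) \<Rightarrow> nat \<Rightarrow> ennreal" where
  "chi2 \<phi> k = (SUP z \<in> UNIV. SUP x \<in> UNIV. SUP y \<in> UNIV.
      (\<Sum>\<^sub>\<infinity> b. ennreal ((exp (\<phi> (block_past b z k x)) - exp (\<phi> (block_past b z k y)))\<^sup>2
                        / exp (\<phi> (block_past b z k y)))))"

definition past :: "int \<Rightarrow> (int \<Rightarrow> 'a) \<Rightarrow> (nat \<Rightarrow> 'a)" where
  "past n \<omega> = (\<lambda>m. \<omega> (n - int m))"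

definition compatible_with :: "((nat \<Rightarrow> 'a::countable) \<Rightarrow> real) \<Rightarrow> (int \<Rightarrow> 'a) measure \<Rightarrow> bool" where
  "compatible_with \<phi> \<mu> \<longleftrightarrow> prob_space \<mu> \<and> sets \<mu> = sets XM \<and>
     (\<forall>(n::nat) a. AE \<omega> in \<mu>.
        real_cond_exp \<mu> (vimage_algebra (space \<mu>) (past (int n)) XmM)
          (indicator {\<omega>. \<omega> (int n + 1) = a}) \<omega> = exp (\<phi> (cons_past a (past (int n) \<omega>))))"

text \<open>Sequence in X_- obtained by writing the finite word s (s ! 0 earliest, last s at position 0)
  in front of the past x.\<close>
definition prepend :: "'a list \<Rightarrow> (nat \<Rightarrow> 'a) \<Rightarrow> (nat \<Rightarrow> 'a)" where
  "prepend s x = (\<lambda>j. if j < length s then rev s ! j else x (j - length s))"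

text \<open>Conditional law (given the past x at time 0) of the block eta_m^{m'} given
  eta_1^{m-1} = (w 1, ..., w (m-1)); a block (u_m, ..., u_{m'}) is the list u with u ! t = u_{m+t}.\<close>
definition cond_block_law :: "((nat \<Rightarrow> 'a) \<Rightarrow> real) \<Rightarrow> (nat \<Rightarrow> 'a) \<Rightarrow> nat \<Rightarrow> (nat \<Rightarrow> 'a) \<Rightarrow> 'a list \<Rightarrow> real" where
  "cond_block_law \<phi> x m w u =
     (\<Prod>t<length u. exp (\<phi> (prepend (map w [1..<m] @ take (Suc t) u) x)))"

text \<open>D_KL(P||Q) = sum_{y in S} P(y) ln(P(y)/Q(y)), with values in extended reals:
  +infinity if P(y) > 0 = Q(y) for some y, otherwise the (well-defined) difference of the
  sums of the positive and of the negative parts of the terms (0 ln(0/q) = 0).\<close>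
definition KL :: "('b \<Rightarrow> real) \<Rightarrow> ('b \<Rightarrow> real) \<Rightarrow> 'b set \<Rightarrow> ereal" where
  "KL P Q S = (if \<exists>y\<in>S. P y > 0 \<and> Q y = 0 then \<infinity> else
     enn2ereal (\<Sum>\<^sub>\<infinity> y\<in>S. ennreal (P y * ln (P y / Q y)))
     - enn2ereal (\<Sum>\<^sub>\<infinity> y\<in>S. ennreal (- (P y * ln (P y / Q y)))))"

end

theory Submission
  imports Defs
begin

definition pl :: "((nat \<Rightarrow> 'a) \<Rightarrow> real) \<Rightarrow> (nat \<Rightarrow> 'a) \<Rightarrow> 'a list \<Rightarrow> real" where
  "pl \<phi> X u = (\<Prod>t<length u. exp (\<phi> (prepend (take (Suc t) u) X)))"

definition gK :: "real \<Rightarrow> real \<Rightarrow> real" where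
  "gK p q = p * ln (p / q) - p + q"

lemma prepend_append: "prepend (s1 @ s2) X = prepend s2 (prepend s1 X)"
  unfolding prepend_def by (auto simp: fun_eq_iff nth_append ac_simps)

lemma prepend_Nil[simp]: "prepend [] X = X"
  by (simp add: prepend_def)

lemma prepend_single: "prepend [v] X = cons_past v X"
  by (auto simp: prepend_def cons_past_def fun_eq_iff)

lemma prepend_Cons: "prepend (v # s) X = prepend s (cons_past v X)"
  using prepend_append[of "[v]" s X] by (simp add: prepend_single)

lemma pl_Nil[simp]: "pl \<phi> X [] = 1"
  by (simp add: pl_def)

lemma pl_Cons: "pl \<phi> X (v # u) = exp (\<phi> (cons_past v X)) * pl \<phi> (cons_past v X) u"
  unfolding pl_def by (simp add: prod.lessThan_Suc_shift prepend_single prepend_Cons del: prod.lessThan_Suc)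

lemma pl_pos: "pl \<phi> X u > 0"
  unfolding pl_def by (simp add: prod_pos)

lemma gK_nonneg:
  assumes "p > 0" "q > 0" shows "gK p q \<ge> 0"
proof -
  have "ln (q / p) \<le> q / p - 1" using assms by (intro ln_le_minus_one) simp
  then have "p * ln (q / p) \<le> p * (q / p - 1)" using assms by (simp add: mult_left_mono)
  moreover have "p * (q / p - 1) = q - p" using assms by (simp add: field_simps)
  moreover have "ln (p / q) = - ln (q / p)" using assms by (simp add: ln_div)
  ultimately show ?thesis by (simp add: gK_def)
qed

lemma gK_le:
  assumes "p > 0" "q > 0" shows "gK p q \<le> (p - q)\<^sup>2 / q"
proof -
  have "ln (p / q) \<le> p / q - 1" using assms by (intro ln_le_minus_one) simp
  then have "p * ln (p / q) \<le> p * (p / q - 1)"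
    using assms by (simp add: mult_left_mono)
  moreover have "(p - q)\<^sup>2 / q = p * (p / q - 1) - p + q"
    using assms by (simp add: field_simps power2_eq_square)
  ultimately show ?thesis by (simp add: gK_def)
qed

lemma gK_mult:
  assumes "p > 0" "q > 0" "P > 0" "Q > 0"
  shows "gK (p * P) (q * Q) = p * gK P Q + P * gK p q + ((p - q) * P + (q - p) * Q)"
proof -
  have "ln ((p * P) / (q * Q)) = ln (p / q) + ln (P / Q)"
    using assms by (simp add: ln_div ln_mult)
  then show ?thesis unfolding gK_def by (simp add: algebra_simps)
qed

lemma Ls_Suc: "{u. length u = Suc L} = (\<lambda>(v, u). v # u) ` (UNIV \<times> {u. length u = L})"
  by (auto simp: length_Suc_conv image_iff)

lemma Ls_inj: "inj_on (\<lambda>(v, u). v # u) A"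
  by (auto simp: inj_on_def)

lemma Ls_0: "{u. length u = 0} = {[]}" by auto

lemma has_sum_ennreal:
  assumes "(f has_sum s) S" "\<And>x. x \<in> S \<Longrightarrow> f x \<ge> 0"
  shows "((\<lambda>x. ennreal (f x)) has_sum ennreal s) S"
proof -
  have "((ennreal \<circ> f) has_sum ennreal s) S"
  proof (rule has_sum_comm_additive_general)
    fix F assume "finite F" "F \<subseteq> S"
    then show "sum (ennreal \<circ> f) F = ennreal (sum f F)"
      using assms(2) by (subst sum_ennreal[symmetric]) auto
  next
    show "ennreal \<midarrow>s\<rightarrow> ennreal s" using isCont_ennreal[of s] by (simp add: isCont_def)
  qed (fact assms(1))
  then show ?thesis by (simp add: comp_def)
qed

lemma ennreal_infsum_fin:
  assumes nn: "\<And>x. x \<in> S \<Longrightarrow> f x \<ge> 0" and fin: "infsum (\<lambda>x. ennreal (f x)) S \<noteq> \<top>"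
  shows "f summable_on S" "ennreal (infsum f S) = infsum (\<lambda>x. ennreal (f x)) S"
proof -
  have le: "sum f F \<le> enn2real (infsum (\<lambda>x. ennreal (f x)) S)" if "finite F" "F \<subseteq> S" for F
  proof -
    have "ennreal (sum f F) = (\<Sum>x\<in>F. ennreal (f x))"
      using that nn by (subst sum_ennreal) auto
    also have "\<dots> \<le> infsum (\<lambda>x. ennreal (f x)) S"
      using that by (subst nonneg_infsum_complete) (auto intro: SUP_upper)
    finally have "enn2real (ennreal (sum f F)) \<le> enn2real (infsum (\<lambda>x. ennreal (f x)) S)"
      using fin by (intro enn2real_mono) (auto simp: top.not_eq_extremum)
    then show ?thesis using that nn by (simp add: sum_nonneg subset_eq)
  qed
  show sm: "f summable_on S"
  proof (rule nonneg_bdd_above_summable_on)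
    show "bdd_above (sum f ` {F. F \<subseteq> S \<and> finite F})"
      by (rule bdd_aboveI[where M="enn2real (infsum (\<lambda>x. ennreal (f x)) S)"]) (use le in blast)
  qed (use nn in auto)
  have "((\<lambda>x. ennreal (f x)) has_sum ennreal (infsum f S)) S"
    using sm nn by (intro has_sum_ennreal) auto
  then show "ennreal (infsum f S) = infsum (\<lambda>x. ennreal (f x)) S"
    by (simp add: infsumI)
qed

lemma nonneg_Sigma_has_sum:
  fixes f :: "'a \<times> 'b \<Rightarrow> real"
  assumes nn: "\<And>x y. x \<in> A \<Longrightarrow> y \<in> B x \<Longrightarrow> f (x, y) \<ge> 0"
    and inner: "\<And>x. x \<in> A \<Longrightarrow> ((\<lambda>y. f (x, y)) has_sum G x) (B x)"
    and outer: "G summable_on A"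
  shows "(f has_sum infsum G A) (Sigma A B)"
proof -
  have Gnn: "G x \<ge> 0" if "x \<in> A" for x
    by (rule has_sum_nonneg[OF inner[OF that]]) (rule nn[OF that])
  have inf: "infsum (\<lambda>y. norm (f (x, y))) (B x) = G x" if "x \<in> A" for x
  proof -
    have "infsum (\<lambda>y. norm (f (x, y))) (B x) = infsum (\<lambda>y. f (x, y)) (B x)"
      by (rule infsum_cong) (simp add: nn[OF that])
    also have "\<dots> = G x" using inner[OF that] by (rule infsumI)
    finally show ?thesis .
  qed
  have "(\<lambda>z. norm (f z)) summable_on Sigma A B"
  proof (subst Infinite_Sum.abs_summable_on_Sigma_iff, intro conjI ballI)
    fix x assume x: "x \<in> A"
    have e: "(\<lambda>y. norm (f (x, y))) summable_on B x \<longleftrightarrow> (\<lambda>y. f (x, y)) summable_on B x"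
      by (rule summable_on_cong) (simp add: nn[OF x])
    have "(\<lambda>y. f (x, y)) summable_on B x" using inner[OF x] unfolding summable_on_def by blast
    then show "(\<lambda>y. norm (f (x, y))) summable_on B x" using e by simp
  next
    have e: "(\<lambda>x. norm (infsum (\<lambda>y. norm (f (x, y))) (B x))) summable_on A \<longleftrightarrow> G summable_on A"
      by (rule summable_on_cong) (metis inf Gnn abs_of_nonneg real_norm_def)
    show "(\<lambda>x. norm (infsum (\<lambda>y. norm (f (x, y))) (B x))) summable_on A" using e outer by simp
  qed
  then have sm: "f summable_on Sigma A B" by (rule abs_summable_summable)
  have "infsum (\<lambda>x. infsum (\<lambda>y. f (x,y)) (B x)) A = infsum f (Sigma A B)"
    using sm by (rule infsum_Sigma_banach)
  moreover have "infsum (\<lambda>x. infsum (\<lambda>y. f (x,y)) (B x)) A = infsum G A"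
    by (rule infsum_cong) (rule infsumI[OF inner])
  ultimately have "infsum f (Sigma A B) = infsum G A" by simp
  with has_sum_infsum[OF sm] show ?thesis by simp
qed


lemma pot_sum: "potential \<phi> \<Longrightarrow> ((\<lambda>a. exp (\<phi> (cons_past a x))) has_sum 1) UNIV"
  by (simp add: potential_def)

lemma pl_sum1:
  assumes pot: "potential \<phi>"
  shows "(pl \<phi> X has_sum 1) {u. length u = L}"
proof (induction L arbitrary: X)
  case 0
  show ?case using has_sum_finite[of "{[]}" "pl \<phi> X"] by (simp add: Ls_0)
next
  case (Suc L)
  let ?f = "\<lambda>(v, u). pl \<phi> X (v # u)"
  have "(?f has_sum infsum (\<lambda>v. exp (\<phi> (cons_past v X))) UNIV) (UNIV \<times> {u. length u = L})"
  proof (rule nonneg_Sigma_has_sum)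
    fix v u show "0 \<le> ?f (v, u)" using pl_pos[of \<phi> X "v # u"] by simp
  next
    fix v
    have "((\<lambda>u. exp (\<phi> (cons_past v X)) * pl \<phi> (cons_past v X) u) has_sum exp (\<phi> (cons_past v X)) * 1) {u. length u = L}"
      by (rule has_sum_cmult_right) (rule Suc.IH)
    then show "((\<lambda>u. ?f (v, u)) has_sum exp (\<phi> (cons_past v X))) {u. length u = L}"
      by (simp add: pl_Cons)
  next
    show "(\<lambda>v. exp (\<phi> (cons_past v X))) summable_on UNIV"
      using pot_sum[OF pot] unfolding summable_on_def by blast
  qed
  moreover have "infsum (\<lambda>v. exp (\<phi> (cons_past v X))) UNIV = 1"
    using pot_sum[OF pot] by (rule infsumI)
  ultimately have "(?f has_sum 1) (UNIV \<times> {u. length u = L})" by simp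
  then show ?case
  proof -
    have "(pl \<phi> X \<circ> (\<lambda>(v, u). v # u)) = ?f" by (auto simp: fun_eq_iff)
    then show ?thesis
      unfolding Ls_Suc using \<open>(?f has_sum 1) (UNIV \<times> {u. length u = L})\<close>
      by (subst has_sum_reindex[OF Ls_inj]) simp
  qed
qed

lemma stepB:
  assumes agree: "\<forall>j<d. X j = Y j" and fin: "chi2 \<phi> d \<noteq> \<top>"
  shows "(\<lambda>v. gK (exp (\<phi> (cons_past v X))) (exp (\<phi> (cons_past v Y)))) summable_on UNIV"
    "infsum (\<lambda>v. gK (exp (\<phi> (cons_past v X))) (exp (\<phi> (cons_past v Y)))) UNIV \<le> enn2real (chi2 \<phi> d)"
proof -
  define z :: "int \<Rightarrow> _" where "z i = X (nat (- i) - 1)" for i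
  define X' where "X' m = X (m + d)" for m
  define Y' where "Y' m = Y (m + d)" for m
  have ex: "cons_past v X = block_past v z d X'" for v
    by (auto simp: fun_eq_iff cons_past_def block_past_def z_def X'_def)
  have ey: "cons_past v Y = block_past v z d Y'" for v
    using agree by (auto simp: fun_eq_iff cons_past_def block_past_def z_def Y'_def)
  let ?g = "\<lambda>v. gK (exp (\<phi> (cons_past v X))) (exp (\<phi> (cons_past v Y)))"
  have "infsum (\<lambda>v. ennreal (?g v)) UNIV
      \<le> (\<Sum>\<^sub>\<infinity> b. ennreal ((exp (\<phi> (block_past b z d X')) - exp (\<phi> (block_past b z d Y')))\<^sup>2
                        / exp (\<phi> (block_past b z d Y'))))"
    by (rule infsum_mono[OF nonneg_summable_on_complete nonneg_summable_on_complete]) (simp_all add: ex ey ennreal_leI gK_le)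
  also have "\<dots> \<le> chi2 \<phi> d"
    unfolding chi2_def by (intro SUP_upper2[of z] SUP_upper2[of X'] SUP_upper[of Y']) auto
  finally have le: "infsum (\<lambda>v. ennreal (?g v)) UNIV \<le> chi2 \<phi> d" .
  then have nt: "infsum (\<lambda>v. ennreal (?g v)) UNIV \<noteq> \<top>"
    using fin by (auto simp: top_unique)
  have gnn: "\<And>v. v \<in> UNIV \<Longrightarrow> ?g v \<ge> 0" by (intro gK_nonneg) auto
  show "?g summable_on UNIV" by (rule ennreal_infsum_fin(1)[OF gnn nt])
  have "ennreal (infsum ?g UNIV) \<le> chi2 \<phi> d"
    using ennreal_infsum_fin(2)[OF gnn nt] le by simp
  then show "infsum ?g UNIV \<le> enn2real (chi2 \<phi> d)"
  proof -
    have "enn2real (ennreal (infsum ?g UNIV)) \<le> enn2real (chi2 \<phi> d)"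
      using \<open>ennreal (infsum ?g UNIV) \<le> chi2 \<phi> d\<close> fin
      by (intro enn2real_mono) (auto simp: top.not_eq_extremum)
    moreover have "infsum ?g UNIV \<ge> 0" using gnn by (intro infsum_nonneg) auto
    ultimately show ?thesis by simp
  qed
qed


lemma mainC:
  assumes pot: "potential \<phi>"
  shows "\<forall>X Y d. (\<forall>j<d. X j = Y j) \<longrightarrow> (\<forall>t<L. chi2 \<phi> (d + t) \<noteq> \<top>) \<longrightarrow>
    (\<lambda>u. gK (pl \<phi> X u) (pl \<phi> Y u)) summable_on {u. length u = L} \<and>
    infsum (\<lambda>u. gK (pl \<phi> X u) (pl \<phi> Y u)) {u. length u = L} \<le> (\<Sum>t<L. enn2real (chi2 \<phi> (d + t)))"
proof (induction L)
  case 0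
  show ?case by (simp add: Ls_0 gK_def summable_on_finite)
next
  case (Suc L)
  show ?case
  proof (intro allI impI)
    fix X Y :: "nat \<Rightarrow> 'a" and d :: nat
    assume agree: "\<forall>j<d. X j = Y j" and fin: "\<forall>t<Suc L. chi2 \<phi> (d + t) \<noteq> \<top>"
    let ?Ls = "{u :: 'a list. length u = L}"
    define p where "p v = exp (\<phi> (cons_past v X))" for v
    define q where "q v = exp (\<phi> (cons_past v Y))" for v
    define P where "P v = pl \<phi> (cons_past v X)" for v
    define Q where "Q v = pl \<phi> (cons_past v Y)" for v
    define B where "B = (\<Sum>t<L. enn2real (chi2 \<phi> (Suc d + t)))"
    define K where "K v = infsum (\<lambda>u. gK (P v u) (Q v u)) ?Ls" for v
    have IH: "(\<lambda>u. gK (P v u) (Q v u)) summable_on ?Ls \<and> K v \<le> B" for v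
    proof -
      have ag: "\<forall>j<Suc d. cons_past v X j = cons_past v Y j"
        using agree by (auto simp: cons_past_def)
      have fn: "\<forall>t<L. chi2 \<phi> (Suc d + t) \<noteq> \<top>"
      proof (intro allI impI)
        fix t assume "t < L"
        then have "chi2 \<phi> (d + Suc t) \<noteq> \<top>" using fin[rule_format, of "Suc t"] by simp
        then show "chi2 \<phi> (Suc d + t) \<noteq> \<top>" by simp
      qed
      show ?thesis using Suc.IH[rule_format, OF ag[rule_format] fn[rule_format]] unfolding K_def P_def Q_def B_def by simp
    qed
    have ppos: "p v > 0" "q v > 0" for v by (simp_all add: p_def q_def)
    have Ppos: "P v u > 0" "Q v u > 0" for v u by (simp_all add: P_def Q_def pl_pos)
    have Psum: "(P v has_sum 1) ?Ls" "(Q v has_sum 1) ?Ls" for v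
      unfolding P_def Q_def by (simp_all add: pl_sum1[OF pot])
    have Knn: "K v \<ge> 0" for v
      unfolding K_def by (intro infsum_nonneg gK_nonneg Ppos)
    define G where "G v = p v * K v + gK (p v) (q v)" for v
    have inner: "((\<lambda>u. gK (p v * P v u) (q v * Q v u)) has_sum G v) ?Ls" for v
    proof -
      have h1: "((\<lambda>u. p v * gK (P v u) (Q v u)) has_sum p v * K v) ?Ls"
        unfolding K_def using IH[of v] by (intro has_sum_cmult_right has_sum_infsum) simp
      have h2: "((\<lambda>u. P v u * gK (p v) (q v)) has_sum 1 * gK (p v) (q v)) ?Ls"
        by (rule has_sum_cmult_left) (rule Psum)
      have h3: "((\<lambda>u. (p v - q v) * P v u) has_sum (p v - q v) * 1) ?Ls"
        by (rule has_sum_cmult_right) (rule Psum)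
      have h4: "((\<lambda>u. (q v - p v) * Q v u) has_sum (q v - p v) * 1) ?Ls"
        by (rule has_sum_cmult_right) (rule Psum)
      have "((\<lambda>u. p v * gK (P v u) (Q v u) + P v u * gK (p v) (q v) + ((p v - q v) * P v u + (q v - p v) * Q v u))
             has_sum (p v * K v + 1 * gK (p v) (q v) + ((p v - q v) * 1 + (q v - p v) * 1))) ?Ls"
        by (intro has_sum_add h1 h2 h3 h4)
      moreover have "(\<lambda>u. gK (p v * P v u) (q v * Q v u)) =
          (\<lambda>u. p v * gK (P v u) (Q v u) + P v u * gK (p v) (q v) + ((p v - q v) * P v u + (q v - p v) * Q v u))"
        by (rule ext, rule gK_mult) (simp_all add: ppos Ppos)
      ultimately show ?thesis by (simp add: G_def)
    qed
    have fin0: "chi2 \<phi> d \<noteq> \<top>" using fin[rule_format, of 0] by simp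
    have gsum: "(\<lambda>v. gK (p v) (q v)) summable_on UNIV"
      and gle: "infsum (\<lambda>v. gK (p v) (q v)) UNIV \<le> enn2real (chi2 \<phi> d)"
      using stepB[OF agree fin0] unfolding p_def q_def by auto
    have psum: "(p has_sum 1) UNIV" unfolding p_def by (rule pot_sum[OF pot])
    then have psm: "p summable_on UNIV" unfolding summable_on_def by blast
    have Gnn: "G v \<ge> 0" for v
      unfolding G_def using ppos Knn by (intro add_nonneg_nonneg mult_nonneg_nonneg gK_nonneg) (auto simp: less_imp_le)
    have Gle: "G v \<le> p v * B + gK (p v) (q v)" for v
      unfolding G_def using IH[of v] ppos[of v] by (simp add: mult_left_mono)
    have bsum: "(\<lambda>v. p v * B + gK (p v) (q v)) summable_on UNIV"
      by (intro summable_on_add summable_on_cmult_left psm gsum)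
    have Gsum: "G summable_on UNIV"
      by (rule summable_on_comparison_test[OF bsum]) (simp_all add: Gle Gnn)
    have main: "((\<lambda>(v, u). gK (p v * P v u) (q v * Q v u)) has_sum infsum G UNIV) (UNIV \<times> ?Ls)"
    proof (rule nonneg_Sigma_has_sum)
      fix v u show "0 \<le> (case (v, u) of (v, u) \<Rightarrow> gK (p v * P v u) (q v * Q v u))"
        using ppos Ppos by (simp add: gK_nonneg)
    qed (simp_all add: inner Gsum)
    have "infsum G UNIV \<le> infsum (\<lambda>v. p v * B + gK (p v) (q v)) UNIV"
      by (rule infsum_mono[OF Gsum bsum Gle])
    also have "\<dots> = infsum p UNIV * B + infsum (\<lambda>v. gK (p v) (q v)) UNIV"
      using psm gsum by (simp add: infsum_add summable_on_cmult_left infsum_cmult_left)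
    also have "\<dots> \<le> B + enn2real (chi2 \<phi> d)"
      using gle infsumI[OF psum] by simp
    also have "\<dots> = (\<Sum>t<Suc L. enn2real (chi2 \<phi> (d + t)))"
      unfolding B_def by (simp add: sum.lessThan_Suc_shift del: sum.lessThan_Suc)
    finally have le: "infsum G UNIV \<le> (\<Sum>t<Suc L. enn2real (chi2 \<phi> (d + t)))" .
    have comp: "((\<lambda>u. gK (pl \<phi> X u) (pl \<phi> Y u)) \<circ> (\<lambda>(v, u). v # u)) =
        (\<lambda>(v, u). gK (p v * P v u) (q v * Q v u))"
      by (auto simp: fun_eq_iff pl_Cons p_def q_def P_def Q_def)
    have hs: "((\<lambda>u. gK (pl \<phi> X u) (pl \<phi> Y u)) has_sum infsum G UNIV) {u. length u = Suc L}"
      unfolding Ls_Suc by (subst has_sum_reindex[OF Ls_inj]) (simp add: comp main)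
    show "(\<lambda>u. gK (pl \<phi> X u) (pl \<phi> Y u)) summable_on {u. length u = Suc L} \<and>
      infsum (\<lambda>u. gK (pl \<phi> X u) (pl \<phi> Y u)) {u. length u = Suc L} \<le> (\<Sum>t<Suc L. enn2real (chi2 \<phi> (d + t)))"
      using hs le by (auto simp: summable_on_def infsumI)
  qed
qed


lemma M_ge1:
  assumes "\<forall>i\<ge>1. M i < M (Suc i)" "M 1 = (1::nat)" "1 \<le> i"
  shows "M i \<ge> 1"
  using assms(3)
proof (induction i rule: dec_induct)
  case base then show ?case using assms(2) by simp
next
  case (step j) then show ?case using assms(1) by (metis less_imp_le_nat order_trans order.strict_trans1 le_trans)
qed

lemma M_monoI:
  assumes "\<forall>i\<ge>1. M i < M (Suc i)" "1 \<le> i" "i \<le> j"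
  shows "M i \<le> (M j :: nat)"
  using assms(3)
proof (induction j rule: dec_induct)
  case base then show ?case by simp
next
  case (step j)
  then have "M j < M (Suc j)" using assms(1,2) by simp
  then show ?case using step by simp
qed

lemma KL_bound:
  fixes P Q :: "'b \<Rightarrow> real"
  assumes Ppos: "\<And>y. y \<in> S \<Longrightarrow> P y > 0" and Qpos: "\<And>y. y \<in> S \<Longrightarrow> Q y > 0"
    and Ps: "(P has_sum 1) S" and Qs: "(Q has_sum 1) S"
    and gs: "(\<lambda>y. gK (P y) (Q y)) summable_on S"
    and gle: "infsum (\<lambda>y. gK (P y) (Q y)) S \<le> C"
  shows "KL P Q S \<le> ereal C"
proof -
  define h where "h y = P y * ln (P y / Q y)" for y
  define K where "K = infsum (\<lambda>y. gK (P y) (Q y)) S"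
  have KLeq: "KL P Q S = enn2ereal (\<Sum>\<^sub>\<infinity> y\<in>S. ennreal (h y)) - enn2ereal (\<Sum>\<^sub>\<infinity> y\<in>S. ennreal (- h y))"
    unfolding KL_def h_def using Qpos by force
  have "((\<lambda>y. gK (P y) (Q y) + P y + (-1) * Q y) has_sum (K + 1 + (-1) * 1)) S"
    unfolding K_def by (intro has_sum_add has_sum_cmult_right has_sum_infsum gs Ps Qs)
  then have hs: "(h has_sum K) S"
    by (subst has_sum_cong[where g="\<lambda>y. gK (P y) (Q y) + P y + (-1) * Q y"]) (auto simp: h_def gK_def)
  then have "h summable_on S" unfolding summable_on_def by blast
  then have habs: "(\<lambda>y. norm (h y)) summable_on S"
    using summable_on_iff_abs_summable_on_real by blast
  have hp: "(\<lambda>y. max 0 (h y)) summable_on S"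
    by (rule summable_on_comparison_test[OF habs]) auto
  have hn: "(\<lambda>y. max 0 (- h y)) summable_on S"
    by (rule summable_on_comparison_test[OF habs]) auto
  define Ap where "Ap = infsum (\<lambda>y. max 0 (h y)) S"
  define An where "An = infsum (\<lambda>y. max 0 (- h y)) S"
  have ep: "(\<Sum>\<^sub>\<infinity> y\<in>S. ennreal (h y)) = ennreal Ap"
  proof -
    have "((\<lambda>y. ennreal (max 0 (h y))) has_sum ennreal Ap) S"
      unfolding Ap_def by (intro has_sum_ennreal has_sum_infsum hp) auto
    then show ?thesis by (simp add: ennreal_max_0 infsumI)
  qed
  have en: "(\<Sum>\<^sub>\<infinity> y\<in>S. ennreal (- h y)) = ennreal An"
  proof -
    have "((\<lambda>y. ennreal (max 0 (- h y))) has_sum ennreal An) S"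
      unfolding An_def by (intro has_sum_ennreal has_sum_infsum hn) auto
    then show ?thesis by (simp add: ennreal_max_0 infsumI)
  qed
  have Apn: "Ap \<ge> 0" "An \<ge> 0" unfolding Ap_def An_def by (auto intro: infsum_nonneg)
  have "((\<lambda>y. max 0 (h y) + (-1) * max 0 (- h y)) has_sum (Ap + (-1) * An)) S"
    unfolding Ap_def An_def by (intro has_sum_add has_sum_cmult_right has_sum_infsum hp hn)
  moreover have "(\<lambda>y. max 0 (h y) + (-1) * max 0 (- h y)) = h" by (auto simp: fun_eq_iff)
  ultimately have "Ap - An = K" using hs by (simp add: has_sum_unique)
  then have "KL P Q S = ereal K" unfolding KLeq ep en using Apn by (simp add: enn2ereal_ennreal)
  then show ?thesis using gle K_def by simp
qed

theorem lemma1: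
  fixes \<phi> :: "(nat \<Rightarrow> 'a::countable) \<Rightarrow> real"
    and M :: "nat \<Rightarrow> nat"
    and x y :: "nat \<Rightarrow> 'a"
    and \<mu> \<nu> :: "(int \<Rightarrow> 'a) measure"
    and n k :: nat
    and a b c :: "int \<Rightarrow> 'a"
  assumes pot: "potential \<phi>"
    and M_mono: "\<forall>i\<ge>1. M i < M (Suc i)"
    and M1: "M 1 = 1"
    and mu: "compatible_with \<phi> \<mu>" and mu0: "distr \<mu> XmM (past 0) = return XmM x"
    and nu: "compatible_with \<phi> \<nu>" and nu0: "distr \<nu> XmM (past 0) = return XmM y"
    and n: "n \<ge> 1" and k: "k \<le> n - 1"
  shows "KL (cond_block_law \<phi> x (M n)
              (\<lambda>j. if M (n - k) \<le> j then a (int j) else b (int j)))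
            (cond_block_law \<phi> y (M n)
              (\<lambda>j. if M (n - k) \<le> j then a (int j) else c (int j)))
            {u. length u = M (Suc n) - M n}
         \<le> enn2ereal (\<Sum>j = M n..<M (Suc n). chi2 \<phi> (j - M (n - k)))"
proof -
  define L where "L = M (Suc n) - M n"
  define d where "d = M n - M (n - k)"
  define wb where "wb = (\<lambda>j. if M (n - k) \<le> j then a (int j) else b (int j))"
  define wc where "wc = (\<lambda>j. if M (n - k) \<le> j then a (int j) else c (int j))"
  define X where "X = prepend (map wb [1..<M n]) x"
  define Y where "Y = prepend (map wc [1..<M n]) y"
  have nk: "1 \<le> n - k" using n k by arith
  have Mge: "M (n - k) \<ge> 1" by (rule M_ge1[OF M_mono M1 nk])
  have Mle: "M (n - k) \<le> M n" by (rule M_monoI[OF M_mono nk]) simp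
  have Mlt: "M n < M (Suc n)" using M_mono n by simp
  have cbx: "cond_block_law \<phi> x (M n) wb = pl \<phi> X"
    by (simp add: fun_eq_iff cond_block_law_def pl_def X_def prepend_append)
  have cby: "cond_block_law \<phi> y (M n) wc = pl \<phi> Y"
    by (simp add: fun_eq_iff cond_block_law_def pl_def Y_def prepend_append)
  have agree: "\<forall>j<d. X j = Y j"
  proof (intro allI impI)
    fix j assume "j < d"
    then have j: "j < M n - 1" "M (n - k) \<le> M n - 1 - j" "Suc (M n - 1 - Suc j) = M n - 1 - j"
      using Mge Mle unfolding d_def by arith+
    have "X j = wb (M n - 1 - j)"
      unfolding X_def prepend_def using j by (simp add: rev_nth)
    moreover have "Y j = wc (M n - 1 - j)"
      unfolding Y_def prepend_def using j by (simp add: rev_nth)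
    ultimately show "X j = Y j" using j by (simp add: wb_def wc_def)
  qed
  have rhs: "(\<Sum>j = M n..<M (Suc n). chi2 \<phi> (j - M (n - k))) = (\<Sum>t<L. chi2 \<phi> (d + t))"
  proof -
    have "M (Suc n) = L + M n" using Mlt L_def by simp
    then have "(\<Sum>j = M n..<M (Suc n). chi2 \<phi> (j - M (n - k))) = (\<Sum>t = 0..<L. chi2 \<phi> (t + M n - M (n - k)))"
      using sum.shift_bounds_nat_ivl[of "\<lambda>j. chi2 \<phi> (j - M (n - k))" 0 "M n" L] by simp
    also have "\<dots> = (\<Sum>t<L. chi2 \<phi> (d + t))"
      unfolding atLeast0LessThan using Mle by (intro sum.cong) (auto simp: d_def add.commute)
    finally show ?thesis .
  qed
  have goal: "KL (pl \<phi> X) (pl \<phi> Y) {u. length u = L} \<le> enn2ereal (\<Sum>t<L. chi2 \<phi> (d + t))"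
  proof (cases "\<exists>t<L. chi2 \<phi> (d + t) = \<top>")
    case True
    then have s: "(\<Sum>t<L. chi2 \<phi> (d + t)) = \<top>" by (subst ennreal_sum_eq_top) auto
    show ?thesis unfolding s by simp
  next
    case False
    then have fin: "\<forall>t<L. chi2 \<phi> (d + t) \<noteq> \<top>" by auto
    have m: "(\<lambda>u. gK (pl \<phi> X u) (pl \<phi> Y u)) summable_on {u. length u = L} \<and>
      infsum (\<lambda>u. gK (pl \<phi> X u) (pl \<phi> Y u)) {u. length u = L} \<le> (\<Sum>t<L. enn2real (chi2 \<phi> (d + t)))"
      using mainC[OF pot, rule_format, OF agree[rule_format] fin[rule_format]] .
    have "KL (pl \<phi> X) (pl \<phi> Y) {u. length u = L} \<le> ereal (\<Sum>t<L. enn2real (chi2 \<phi> (d + t)))"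
      by (rule KL_bound) (use m in \<open>simp_all add: pl_pos pl_sum1[OF pot]\<close>)
    moreover have "(\<Sum>t<L. chi2 \<phi> (d + t)) = ennreal (\<Sum>t<L. enn2real (chi2 \<phi> (d + t)))"
    proof -
      have "(\<Sum>t<L. chi2 \<phi> (d + t)) = (\<Sum>t<L. ennreal (enn2real (chi2 \<phi> (d + t))))"
        using fin by (intro sum.cong) (auto simp: ennreal_enn2real_if)
      also have "\<dots> = ennreal (\<Sum>t<L. enn2real (chi2 \<phi> (d + t)))"
        by (rule sum_ennreal) simp
      finally show ?thesis .
    qed
    ultimately show ?thesis by (simp add: enn2ereal_ennreal sum_nonneg)
  qed
  show ?thesis
    unfolding wb_def[symmetric] wc_def[symmetric] cbx cby rhs L_def[symmetric]
    by (rule goal)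
qed

end
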